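(* Let $\beta_1,\beta_2,\beta_3$ be pairwise distinct with $|\beta_3-\beta_1|<|\beta_3-\beta_2|$, and assume $\alpha_3-\alpha_1\in\mathbb{Z}_{\le-4}$ and $\alpha_2-\alpha_1\notin\mathbb{Z}_{\ge-1}$. Let $c_n=(-1)^n\frac{(\alpha_1-\alpha_2-1)^{(n)}}{(\beta_3-\beta_2)^n}$, $\tilde F(\alpha;\beta;n)=\sum_{p\ge0}\frac{(\alpha_1-\alpha_2-1+n)^{(p)}}{(1+n)^{(p)}}\big(\frac{\beta_3-\beta_1}{\beta_3-\beta_2}\big)^p$ and $\hat\phi(x)=\sum_{n\ge0}(c_n\tilde F(\alpha;\beta;n)-c_n)x^n$. Then $\hat\phi$ is 1-summable, and for every direction $\theta\notin\{\arg(\beta_1-\beta_3),\arg(\beta_2-\beta_3)\}$ its 1-sum in direction $\theta$ is $$\phi_\theta(x)=\Big(\frac{\beta_1-\beta_2}{\beta_3-\beta_2}\Big)^{\alpha_2-\alpha_1+1}\int_0^{+\infty e^{i\theta}}\Big(1+\frac{\xi}{\beta_3-\beta_1}\Big)^{-1}e^{-\xi/x}d\Big(\frac{\xi}{x}\Big)-\int_0^{+\infty e^{i\theta}}\Big(1+\frac{\xi}{\beta_3-\beta_2}\Big)^{1+\alpha_2-\alpha_1}\Big(1+\frac{\xi}{\beta_3-\beta_1}\Big)^{-1}e^{-\xi/x}d\Big(\frac{\xi}{x}\Big).$$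
   Context: $(a)^{(n)}=a(a+1)\cdots(a+n-1)$, $(a)^{(0)}=1$; complex powers use the principal branch. 1-summability and 1-sum in direction $\theta$ are in the Borel–Laplace sense: the 1-sum is $\int_0^{+\infty e^{i\theta}}h(\zeta)e^{-\zeta/x}d(\zeta/x)$ with $h$ the analytic continuation (of at most exponential growth) of the formal Borel transform $\sum f_n\zeta^n/n!$ of the series $\sum f_nx^n$. *)

theory Defs
  imports "HOL-Analysis.Analysis"
begin

definition open_sector :: "real \<Rightarrow> real \<Rightarrow> complex set" where
  "open_sector \<theta> \<delta> = {\<xi>. \<xi> \<noteq> 0 \<and> (\<exists>\<phi>. \<bar>\<phi> - \<theta>\<bar> < \<delta> \<and> \<xi> = of_real (norm \<xi>) * cis \<phi>)}"

text \<open>h is the analytic continuation of the formal Borel transform of the series with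
  coefficients f (sum f_n zeta^n / n!) to a disc around 0 union an open sector around the
  direction theta, with exponential growth bound A exp(B |zeta|) on that sector.\<close>
definition borel_cont ::
  "(nat \<Rightarrow> complex) \<Rightarrow> real \<Rightarrow> (complex \<Rightarrow> complex) \<Rightarrow> real \<Rightarrow> real \<Rightarrow> bool" where
  "borel_cont f \<theta> h A B \<longleftrightarrow>
     (\<exists>r \<delta>. r > 0 \<and> \<delta> > 0 \<and>
        (\<forall>\<zeta>\<in>ball 0 r. (\<lambda>n. f n * \<zeta> ^ n / fact n) sums h \<zeta>) \<and>
        h holomorphic_on (ball 0 r \<union> open_sector \<theta> \<delta>) \<and>
        (\<forall>\<xi>\<in>open_sector \<theta> \<delta>. norm (h \<xi>) \<le> A * exp (B * norm \<xi>)))"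

definition one_summable_dir :: "(nat \<Rightarrow> complex) \<Rightarrow> real \<Rightarrow> bool" where
  "one_summable_dir f \<theta> \<longleftrightarrow> (\<exists>h A B. borel_cont f \<theta> h A B)"

text \<open>1-summable: 1-summable in every direction except finitely many (directions given by
  unit complex numbers cis theta).\<close>
definition one_summable :: "(nat \<Rightarrow> complex) \<Rightarrow> bool" where
  "one_summable f \<longleftrightarrow> (\<exists>E. finite E \<and> (\<forall>\<theta>. cis \<theta> \<notin> E \<longrightarrow> one_summable_dir f \<theta>))"

text \<open>Integrand of int_0^{+infinity e^{i theta}} g(xi) e^{-xi/x} d(xi/x), parametrised by xi = t e^{i theta}.\<close>
definition laplace_kernel :: "(complex \<Rightarrow> complex) \<Rightarrow> real \<Rightarrow> complex \<Rightarrow> real \<Rightarrow> complex" where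
  "laplace_kernel g \<theta> x t = g (of_real t * cis \<theta>) * exp (- (of_real t * cis \<theta>) / x) * (cis \<theta> / x)"

definition laplace_dir :: "(complex \<Rightarrow> complex) \<Rightarrow> real \<Rightarrow> complex \<Rightarrow> complex" where
  "laplace_dir g \<theta> x = integral {0..} (laplace_kernel g \<theta> x)"

text \<open>g is the 1-sum in direction theta of the series with coefficients f: on the region
  Re(e^{i theta}/x) > B where the Laplace integral of the continued Borel transform converges.\<close>
definition is_one_sum_dir :: "(nat \<Rightarrow> complex) \<Rightarrow> real \<Rightarrow> (complex \<Rightarrow> complex) \<Rightarrow> bool" where
  "is_one_sum_dir f \<theta> g \<longleftrightarrow>
     (\<exists>h A B. borel_cont f \<theta> h A B \<and>
        (\<forall>x. x \<noteq> 0 \<and> Re (cis \<theta> / x) > B \<longrightarrow>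
             (laplace_kernel h \<theta> x has_integral g x) {0..}))"

end

theory Submission
  imports Defs
begin
lemma geom:
  fixes w s :: complex and t \<rho> :: real
  assumes "norm w = 1" "norm s = 1" "t \<ge> 0" "\<rho> > 0"
  shows "\<rho> * norm (w - s) / 2 \<le> norm (of_real t * w - of_real \<rho> * s)"
proof -
  have w: "Re w ^ 2 + Im w ^ 2 = 1" using assms(1) by (metis cmod_power2 power_one)
  have s: "Re s ^ 2 + Im s ^ 2 = 1" using assms(2) by (metis cmod_power2 power_one)
  define c where "c = Re w * Re s + Im w * Im s"
  have cc: "c = Re (w * cnj s)" unfolding c_def by simp
  have "\<bar>Re (w * cnj s)\<bar> \<le> 1" using abs_Re_le_cmod[of "w * cnj s"] assms by (simp add: norm_mult)
  then have c1: "c \<le> 1" "c \<ge> -1" unfolding cc by linarith+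
  have e1: "norm (w - s) ^ 2 = 2 - 2*c" unfolding c_def cmod_power2 using w s
    by (simp add: power2_diff algebra_simps)
  have e2: "norm (of_real t * w - of_real \<rho> * s) ^ 2 = t^2 + \<rho>^2 - 2*t*\<rho>*c"
  proof -
    have w': "t^2*(Re w)^2 + t^2*(Im w)^2 = t^2" using w by (metis distrib_left mult.right_neutral)
    have s': "\<rho>^2*(Re s)^2 + \<rho>^2*(Im s)^2 = \<rho>^2" using s by (metis distrib_left mult.right_neutral)
    show ?thesis unfolding c_def cmod_power2 using w' s' by (simp add: power2_diff algebra_simps power_mult_distrib; linarith)
  qed
  have key: "(\<rho> * norm (w - s) / 2)^2 \<le> norm (of_real t * w - of_real \<rho> * s) ^ 2"
  proof -
    have "(\<rho> * norm (w - s) / 2)^2 = \<rho>^2 * (2 - 2*c) / 4" using e1 by (simp add: power_mult_distrib power_divide)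
    also have "\<dots> \<le> t^2 + \<rho>^2 - 2*t*\<rho>*c"
    proof (cases "c \<ge> 0")
      case True
      have "0 \<le> 4*(t-\<rho>*c)^2 + 2*\<rho>^2*(1-c)*(1+2*c)" using True c1 by (intro add_nonneg_nonneg) auto
      moreover have "4*(t-\<rho>*c)^2 + 2*\<rho>^2*(1-c)*(1+2*c) = 4*(t^2+\<rho>^2-2*t*\<rho>*c) - \<rho>^2*(2-2*c)"
        by (simp add: power2_eq_square algebra_simps)
      ultimately show ?thesis by simp
    next
      case False
      have X: "t*\<rho>*c \<le> 0" using False assms by (simp add: mult_nonneg_nonpos)
      have A0: "\<rho>^2*(2-2*c) \<le> \<rho>^2*4" by (rule mult_left_mono) (use c1 in auto)
      have A1: "\<rho>^2*(2-2*c)/4 \<le> \<rho>^2" using A0 by simp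
      have A2: "2*t*\<rho>*c \<le> 0" using X by (simp add: mult.commute mult.left_commute)
      show ?thesis using A1 A2 zero_le_power2[of t] by linarith
    qed
    finally show ?thesis using e2 by simp
  qed
  show ?thesis using key by (rule power2_le_imp_le) simp
qed
lemma dir_sep:
  fixes s1 s2 :: complex
  assumes "cis \<theta> \<noteq> s1" "cis \<theta> \<noteq> s2"
  obtains \<delta> \<eta> where "\<delta> > 0" "\<eta> > 0"
    "\<And>\<phi>. \<bar>\<phi> - \<theta>\<bar> < \<delta> \<Longrightarrow> \<eta> \<le> norm (cis \<phi> - s1) \<and> \<eta> \<le> norm (cis \<phi> - s2)"
proof -
  define \<eta> where "\<eta> = min (norm (cis \<theta> - s1)) (norm (cis \<theta> - s2)) / 2"
  have \<eta>: "\<eta> > 0" using assms unfolding \<eta>_def by auto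
  have "continuous (at \<theta>) cis"
    using continuous_on_cis[OF continuous_on_id, of UNIV] by (simp add: continuous_on_eq_continuous_at)
  then obtain \<delta> where \<delta>: "\<delta> > 0" "\<And>\<phi>. dist \<phi> \<theta> < \<delta> \<Longrightarrow> dist (cis \<phi>) (cis \<theta>) < \<eta>"
    unfolding continuous_at_eps_delta using \<eta> by blast
  show ?thesis
  proof (rule that[OF \<delta>(1) \<eta>])
    fix \<phi> assume "\<bar>\<phi> - \<theta>\<bar> < \<delta>"
    then have d: "norm (cis \<phi> - cis \<theta>) < \<eta>" using \<delta>(2)[of \<phi>] by (simp add: dist_norm dist_real_def)
    have "norm (cis \<theta> - s1) \<le> norm (cis \<phi> - s1) + norm (cis \<phi> - cis \<theta>)"
      using norm_triangle_ineq4[of "cis \<phi> - s1" "cis \<phi> - cis \<theta>"] by simp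
    moreover have "norm (cis \<theta> - s2) \<le> norm (cis \<phi> - s2) + norm (cis \<phi> - cis \<theta>)"
      using norm_triangle_ineq4[of "cis \<phi> - s2" "cis \<phi> - cis \<theta>"] by simp
    ultimately show "\<eta> \<le> norm (cis \<phi> - s1) \<and> \<eta> \<le> norm (cis \<phi> - s2)"
      using d unfolding \<eta>_def by linarith
  qed
qed

lemma lower_bd:
  fixes d \<xi> :: complex and t \<eta> :: real
  assumes "d \<noteq> 0" "t \<ge> 0" "\<xi> = of_real t * cis \<phi>" "\<eta> \<le> norm (cis \<phi> - sgn (-d))"
  shows "\<eta> / 2 \<le> norm (1 + \<xi> / d)"
proof -
  have md: "- d = of_real (norm d) * sgn (-d)" using assms(1) by (simp add: sgn_eq)
  have g: "norm d * norm (cis \<phi> - sgn (-d)) / 2 \<le> norm (of_real t * cis \<phi> - of_real (norm d) * sgn (-d))"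
    using assms by (intro geom) (auto simp: norm_sgn)
  have "1 + \<xi> / d = (\<xi> - (-d)) / d" using assms(1) by (simp add: field_simps)
  then have "norm (1 + \<xi> / d) = norm (of_real t * cis \<phi> - of_real (norm d) * sgn (-d)) / norm d"
    using md assms(3) by (simp add: norm_divide)
  also have "\<dots> \<ge> norm (cis \<phi> - sgn (-d)) / 2"
    using g assms(1) by (simp add: field_simps)
  finally show ?thesis using assms(4) by linarith
qed

lemma not_nonpos:
  fixes b \<xi> :: complex and t \<eta> :: real
  assumes "b \<noteq> 0" "t \<ge> 0" "\<xi> = of_real t * cis \<phi>" "0 < norm (cis \<phi> - sgn (-b))"
  shows "1 + \<xi> / b \<notin> \<real>\<^sub>\<le>\<^sub>0"
proof
  assume "1 + \<xi> / b \<in> \<real>\<^sub>\<le>\<^sub>0"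
  then obtain q where q: "1 + \<xi> / b = of_real q" "q \<le> 0" by (rule nonpos_Reals_cases)
  then have xi: "\<xi> = of_real (q - 1) * b" using assms(1) by (simp add: field_simps)
  have sq: "sgn (q - 1) = -1" using q(2) by simp
  have "\<xi> \<noteq> 0" using xi q(2) assms(1) by (simp del: of_real_diff)
  then have tpos: "t > 0" using assms(2,3) by (cases "t = 0") auto
  have "sgn \<xi> = cis \<phi>" using assms(3) tpos by (simp add: sgn_mult sgn_of_real)
  moreover have "sgn \<xi> = sgn (-b)" unfolding xi sgn_mult sgn_of_real sq by (simp add: sgn_minus)
  ultimately show False using assms(4) by simp
qed

lemma norm_powr_bd:
  fixes z w :: complex
  assumes "z \<noteq> 0"
  shows "norm (z powr w) \<le> exp (norm w * (\<bar>ln (norm z)\<bar> + pi))"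
proof -
  have "norm (z powr w) = exp (Re (w * ln z))" using assms by (simp add: powr_def)
  also have "\<dots> \<le> exp (norm (w * ln z))" by (subst exp_le_cancel_iff) (rule complex_Re_le_cmod)
  also have "norm (w * ln z) \<le> norm w * (\<bar>ln (norm z)\<bar> + pi)"
  proof -
    have "norm (ln z) \<le> \<bar>Re (ln z)\<bar> + \<bar>Im (ln z)\<bar>" by (rule cmod_le)
    also have "\<dots> \<le> \<bar>ln (norm z)\<bar> + pi" using assms mpi_less_Im_Ln[of z] Im_Ln_le_pi[of z] by auto
    finally show ?thesis by (simp add: norm_mult mult_left_mono)
  qed
  then have "exp (norm (w * ln z)) \<le> exp (norm w * (\<bar>ln (norm z)\<bar> + pi))" by simp
  finally show ?thesis .
qed
lemma binom_s:
  fixes a w :: complex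
  assumes "norm w < 1"
  shows "(\<lambda>n. pochhammer a n / fact n * w^n) sums (1 - w) powr (-a)"
proof -
  have "(\<lambda>n. ((-a) gchoose n) * (-w)^n) sums (1 + -w) powr (-a)"
    using assms by (intro gen_binomial_complex) simp
  moreover have "((-a) gchoose n) * (-w)^n = pochhammer a n / fact n * w^n" for n
  proof -
    have m0: "((-1::complex)^n) * (-1)^n = (-1)^(2*n)" by (simp only: mult_2 power_add)
    have m1: "((-1::complex)^n) * (-1)^n = 1" unfolding m0 by simp
    have "((-a) gchoose n) * (-w)^n = ((-1)^n * (-1)^n) * (pochhammer a n / fact n * w^n)"
      unfolding gbinomial_pochhammer power_minus[of w n] by simp
    then show ?thesis using m1 by simp
  qed
  ultimately show ?thesis by simp
qed

lemma coeff_formula: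
  fixes a b d :: complex
  assumes b: "b \<noteq> 0" and d: "d \<noteq> 0" and nd: "norm d < norm b"
    and a: "\<forall>k::nat. a \<noteq> - of_nat k"
  shows "(let c = (-1) ^ N * pochhammer a N / b ^ N;
           Ft = (\<Sum>p. pochhammer (a + of_nat N) p / pochhammer (1 + of_nat N) p * (d / b) ^ p)
          in c * Ft - c) =
         fact N * (-1/d)^N * ((1 - d/b) powr (-a) - (\<Sum>m<Suc N. pochhammer a m / fact m * (d/b)^m))"
proof -
  define r where "r = d / b"
  define K where "K = (1 - r) powr (-a)"
  define t where "t m = pochhammer a m / fact m * r^m" for m
  define c where "c = (-1) ^ N * pochhammer a N / b ^ N"
  define F where "F = fact N * (-1/d)^N"
  have nr: "norm r < 1" using nd b by (simp add: r_def norm_divide)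
  have sT: "t sums K" unfolding t_def K_def by (rule binom_s[OF nr])
  have shift: "(\<lambda>p. t (p + N)) sums (K - (\<Sum>m<N. t m))"
    using sT by (subst sums_iff_shift) simp
  have PaN: "pochhammer a N \<noteq> 0" using a by (auto simp: pochhammer_eq_0_iff)
  have c0: "c \<noteq> 0" using PaN b by (simp add: c_def)
  have dm: "d^N * (-(1/d))^N = (-1)^N" using d by (simp flip: power_mult_distrib)
  have termeq: "c * (pochhammer (a + of_nat N) p / pochhammer (1 + of_nat N) p * r^p) = F * t (p + N)" for p
  proof -
    have P1: "pochhammer a (N+p) = pochhammer a N * pochhammer (a + of_nat N) p" by (rule pochhammer_product')
    have P2: "(fact (N+p)::complex) = fact N * pochhammer (1 + of_nat N) p"
      using pochhammer_product'[of "1::complex" N p] by (simp add: pochhammer_fact add.commute)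
    have P3: "pochhammer (1 + of_nat N) p \<noteq> (0::complex)" using P2 by (metis fact_nonzero mult_zero_right)
    have rN: "r^N = d^N / b^N" by (simp add: r_def power_divide)
    show ?thesis
      unfolding c_def F_def t_def P1 add.commute[of p N] P2 power_add rN
      using b d P3 dm by (simp add: field_simps power_divide)
  qed
  have cs: "(\<lambda>p. c * (pochhammer (a + of_nat N) p / pochhammer (1 + of_nat N) p * r^p)) sums (F * (K - (\<Sum>m<N. t m)))"
    unfolding termeq by (rule sums_mult[OF shift])
  have "(\<lambda>p. pochhammer (a + of_nat N) p / pochhammer (1 + of_nat N) p * r^p) sums (F * (K - (\<Sum>m<N. t m)) / c)"
    using sums_divide[OF cs, of c] c0 by simp
  then have Ft: "(\<Sum>p. pochhammer (a + of_nat N) p / pochhammer (1 + of_nat N) p * r^p) = F * (K - (\<Sum>m<N. t m)) / c"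
    by (rule sums_unique[symmetric])
  have ct: "c = F * t N" unfolding c_def F_def t_def r_def using d dm by (simp add: field_simps power_divide)
  show ?thesis
    unfolding Let_def r_def[symmetric] Ft c_def[symmetric] K_def[symmetric] t_def[symmetric] F_def[symmetric]
  proof -
    have "c * (F * (K - (\<Sum>m<N. t m)) / c) = F * (K - (\<Sum>m<N. t m))" using c0 by simp
    then show "c * (F * (K - (\<Sum>m<N. t m)) / c) - c = F * (K - (\<Sum>m<Suc N. t m))"
      by (simp add: ct algebra_simps)
  qed
qed
lemma abs_summable_s:
  fixes a w :: complex
  assumes "norm w < 1"
  shows "summable (\<lambda>n. norm (pochhammer a n / fact n * w^n))"
proof -
  define x where "x = complex_of_real ((1 + norm w) / 2)"
  have "norm x = (1 + norm w)/2" unfolding x_def norm_of_real by simp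
  then have nx: "norm x < 1" "norm w < norm x" using assms by auto
  show ?thesis
    by (rule powser_insidea[OF sums_summable[OF binom_s[OF nx(1)]] nx(2)])
qed

lemma borel_sum:
  fixes a b d \<zeta> :: complex
  assumes b: "b \<noteq> 0" and d: "d \<noteq> 0" and nd: "norm d < norm b" and z: "norm \<zeta> < norm d"
  shows "(\<lambda>N. fact N * (-1/d)^N * ((1 - d/b) powr (-a) - (\<Sum>m<Suc N. pochhammer a m / fact m * (d/b)^m)) * \<zeta>^N / fact N)
     sums ((1 - d/b) powr (-a) * inverse (1 + \<zeta>/d) - (1 + \<zeta>/b) powr (-a) * inverse (1 + \<zeta>/d))"
proof -
  define K where "K = (1 - d/b) powr (-a)"
  define u where "u = -\<zeta>/d"
  define w where "w = -\<zeta>/b"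
  define s where "s m = pochhammer a m / fact m" for m
  have nu: "norm u < 1" using z d by (simp add: u_def norm_divide)
  have nw: "norm w < 1" using z nd b by (simp add: w_def norm_divide)
  have wu: "w = (d/b) * u" using d by (simp add: w_def u_def)
  have termeq: "fact N * (-1/d)^N * (K - (\<Sum>m<Suc N. s m * (d/b)^m)) * \<zeta>^N / fact N
      = K * u^N - (\<Sum>i\<le>N. (s i * w^i) * u^(N - i))" for N
  proof -
    have e1: "fact N * (-1/d)^N * X * \<zeta>^N / fact N = u^N * X" for X
      by (simp add: u_def power_mult_distrib[symmetric] field_simps)
    have e2: "u^N * (s m * (d/b)^m) = (s m * w^m) * u^(N - m)" if "m \<le> N" for m
    proof -
      have hN: "u^N = u^m * u^(N-m)" using that by (simp flip: power_add)
      have "u^N * (s m * (d/b)^m) = s m * ((d/b)^m * u^m) * u^(N-m)" unfolding hN by (simp add: mult_ac)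
      also have "\<dots> = (s m * w^m) * u^(N-m)" unfolding wu power_mult_distrib by simp
      finally show ?thesis .
    qed
    have "u^N * (\<Sum>m<Suc N. s m * (d/b)^m) = (\<Sum>i\<le>N. (s i * w^i) * u^(N - i))"
      unfolding sum_distrib_left lessThan_Suc_atMost by (rule sum.cong) (auto simp: e2)
    then show ?thesis unfolding e1 by (simp add: algebra_simps)
  qed
  have g: "(\<lambda>N. u^N) sums inverse (1 + \<zeta>/d)"
    using geometric_sums[OF nu] by (simp add: u_def divide_inverse)
  have ws: "(\<lambda>m. s m * w^m) sums (1 + \<zeta>/b) powr (-a)"
    using binom_s[OF nw, of a] by (simp add: s_def w_def)
  have cp: "(\<lambda>k. \<Sum>i\<le>k. (s i * w^i) * u^(k - i)) sums ((\<Sum>m. s m * w^m) * (\<Sum>k. u^k))"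
    by (rule Cauchy_product_sums) (use abs_summable_s[OF nw, of a] summable_geometric[of "norm u"] nu in \<open>auto simp: s_def norm_power\<close>)
  have cp': "(\<lambda>k. \<Sum>i\<le>k. (s i * w^i) * u^(k - i)) sums ((1 + \<zeta>/b) powr (-a) * inverse (1 + \<zeta>/d))"
    using cp unfolding sums_unique[OF ws, symmetric] sums_unique[OF g, symmetric] .
  have "(\<lambda>N. K * u^N - (\<Sum>i\<le>N. (s i * w^i) * u^(N - i))) sums (K * inverse (1 + \<zeta>/d) - (1 + \<zeta>/b) powr (-a) * inverse (1 + \<zeta>/d))"
    by (intro sums_diff sums_mult g cp')
  then show ?thesis unfolding termeq[unfolded s_def K_def] K_def s_def .
qed
lemma growth:
  fixes b d p \<xi> :: complex and t \<eta> :: real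
  assumes b: "b \<noteq> 0" and d: "d \<noteq> 0" and \<eta>: "\<eta> > 0" and t: "t \<ge> 0" and xi: "\<xi> = of_real t * cis \<phi>"
    and h1: "\<eta> \<le> norm (cis \<phi> - sgn (-d))" and h2: "\<eta> \<le> norm (cis \<phi> - sgn (-b))"
  shows "norm (inverse (1 + \<xi>/d)) \<le> 2/\<eta>"
    and "norm ((1 + \<xi>/b) powr p) \<le> exp (norm p * (\<bar>ln (\<eta>/2)\<bar> + pi)) * exp (norm p / norm b * t)"
proof -
  have l1: "\<eta>/2 \<le> norm (1 + \<xi>/d)" by (rule lower_bd[OF d t xi h1])
  then have "inverse (norm (1 + \<xi>/d)) \<le> inverse (\<eta>/2)" using \<eta> by (intro le_imp_inverse_le) auto
  then show "norm (inverse (1 + \<xi>/d)) \<le> 2/\<eta>" by (simp add: norm_inverse)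
  define z where "z = 1 + \<xi>/b"
  have l2: "\<eta>/2 \<le> norm z" unfolding z_def by (rule lower_bd[OF b t xi h2])
  have zpos: "norm z > 0" using l2 \<eta> by linarith
  have nxi: "norm \<xi> = t" using xi t by (simp add: norm_mult)
  have zup: "norm z \<le> 1 + t / norm b" unfolding z_def using norm_triangle_ineq[of 1 "\<xi>/b"] nxi by (simp add: norm_divide)
  have lnup: "ln (norm z) \<le> t / norm b" using ln_le_minus_one[OF zpos] zup by linarith
  have lnlo: "ln (\<eta>/2) \<le> ln (norm z)" using l2 \<eta> zpos by (subst ln_le_cancel_iff) auto
  have lnabs: "\<bar>ln (norm z)\<bar> \<le> t / norm b + \<bar>ln (\<eta>/2)\<bar>"
  proof -
    have "0 \<le> t / norm b" using t by simp
    moreover have "- \<bar>ln (\<eta>/2)\<bar> \<le> ln (\<eta>/2)" by simp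
    ultimately show ?thesis using lnup lnlo unfolding abs_le_iff by linarith
  qed
  have "norm (z powr p) \<le> exp (norm p * (\<bar>ln (norm z)\<bar> + pi))" using zpos by (intro norm_powr_bd) auto
  also have "\<dots> \<le> exp (norm p * (t / norm b + \<bar>ln (\<eta>/2)\<bar> + pi))"
    using lnabs by (simp add: mult_left_mono)
  also have "\<dots> = exp (norm p * (\<bar>ln (\<eta>/2)\<bar> + pi)) * exp (norm p / norm b * t)"
    by (simp add: exp_add[symmetric] algebra_simps)
  finally show "norm ((1 + \<xi>/b) powr p) \<le> exp (norm p * (\<bar>ln (\<eta>/2)\<bar> + pi)) * exp (norm p / norm b * t)"
    unfolding z_def .
qed

lemma lebesgue_atLeast0: "{0::real..} \<in> sets lebesgue" by simp

lemma lap_int: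
  fixes g :: "complex \<Rightarrow> complex" and x :: complex
  assumes cont: "continuous_on {0..} (\<lambda>t. g (of_real t * cis \<theta>))"
    and bd: "\<And>t. t \<ge> 0 \<Longrightarrow> norm (g (of_real t * cis \<theta>)) \<le> M * exp (B*t)"
    and x: "x \<noteq> 0" and re: "Re (cis \<theta> / x) > B"
  shows "laplace_kernel g \<theta> x integrable_on {0..}"
proof -
  define c where "c = Re (cis \<theta> / x)"
  have cont': "continuous_on {0..} (laplace_kernel g \<theta> x)"
    unfolding laplace_kernel_def using x by (intro continuous_intros cont) auto
  have ig: "(\<lambda>t. (M * norm (cis \<theta> / x)) * exp (-(c - B) * t)) integrable_on {0..}"
    using has_integral_mult_right[OF has_integral_exp_minus_to_infinity[of "c - B" 0], of "M * norm (cis \<theta> / x)"] re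
    unfolding c_def integrable_on_def by auto
  have bd': "norm (laplace_kernel g \<theta> x t) \<le> (M * norm (cis \<theta> / x)) * exp (-(c - B) * t)" if "t \<in> {0..}" for t
  proof -
    have t: "t \<ge> 0" using that by simp
    have re2: "Re (- (of_real t * cis \<theta>) / x) = - t * c"
    proof -
      have e: "- (of_real t * cis \<theta>) / x = of_real (-t) * (cis \<theta> / x)" by simp
      have ReL: "\<And>r z. Re (of_real r * z) = r * Re z" by simp
      show ?thesis unfolding e ReL c_def by simp
    qed
    have "norm (laplace_kernel g \<theta> x t) = norm (g (of_real t * cis \<theta>)) * exp (- t * c) * norm (cis \<theta> / x)"
      unfolding laplace_kernel_def norm_mult norm_exp_eq_Re re2 ..
    also have "\<dots> \<le> M * exp (B*t) * exp (- t * c) * norm (cis \<theta> / x)"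
      using bd[OF t] by (intro mult_right_mono) auto
    also have "\<dots> = (M * norm (cis \<theta> / x)) * exp (-(c - B) * t)"
      by (simp add: exp_add[symmetric] algebra_simps) 
    finally show ?thesis .
  qed
  have "laplace_kernel g \<theta> x absolutely_integrable_on {0..}"
    by (rule measurable_bounded_by_integrable_imp_absolutely_integrable[OF
          continuous_imp_measurable_on_sets_lebesgue[OF cont' lebesgue_atLeast0] lebesgue_atLeast0 ig bd'])
  then show ?thesis using set_lebesgue_integral_eq_integral(1) by blast
qed
lemma region_facts:
  fixes b d :: complex
  assumes b: "b \<noteq> 0" and d: "d \<noteq> 0" and nd: "norm d < norm b" and \<eta>: "\<eta> > 0"
    and sep: "\<And>\<phi>. \<bar>\<phi> - \<theta>\<bar> < \<delta> \<Longrightarrow> \<eta> \<le> norm (cis \<phi> - sgn (-d)) \<and> \<eta> \<le> norm (cis \<phi> - sgn (-b))"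
    and xi: "\<xi> \<in> ball 0 (norm d) \<union> open_sector \<theta> \<delta>"
  shows "1 + \<xi>/d \<noteq> 0" and "1 + \<xi>/b \<notin> \<real>\<^sub>\<le>\<^sub>0"
proof -
  have "(1 + \<xi>/d \<noteq> 0) \<and> (1 + \<xi>/b \<notin> \<real>\<^sub>\<le>\<^sub>0)"
  proof (cases "\<xi> \<in> ball 0 (norm d)")
    case True
    then have n: "norm \<xi> < norm d" by simp
    have nd1: "norm (\<xi>/d) < 1" using n d by (simp add: norm_divide)
    have nb1: "norm (\<xi>/b) < 1" using n nd b by (simp add: norm_divide)
    have "1 + \<xi>/d \<noteq> 0"
    proof
      assume "1 + \<xi>/d = 0"
      then have "\<xi>/d = -1" by (simp add: add_eq_0_iff)
      then show False using nd1 by simp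
    qed
    moreover have "Re (1 + \<xi>/b) > 0"
      using abs_Re_le_cmod[of "\<xi>/b"] nb1 by simp
    then have "1 + \<xi>/b \<notin> \<real>\<^sub>\<le>\<^sub>0" by (simp add: complex_nonpos_Reals_iff)
    ultimately show ?thesis by blast
  next
    case False
    then have "\<xi> \<in> open_sector \<theta> \<delta>" using xi by blast
    then obtain \<phi> where ph: "\<bar>\<phi> - \<theta>\<bar> < \<delta>" "\<xi> = of_real (norm \<xi>) * cis \<phi>"
      unfolding open_sector_def by blast
    have s: "\<eta> \<le> norm (cis \<phi> - sgn (-d))" "\<eta> \<le> norm (cis \<phi> - sgn (-b))" using sep[OF ph(1)] by auto
    have "\<eta>/2 \<le> norm (1 + \<xi>/d)" by (rule lower_bd[OF d _ ph(2) s(1)]) simp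
    then have "1 + \<xi>/d \<noteq> 0" using \<eta> by auto
    moreover have "1 + \<xi>/b \<notin> \<real>\<^sub>\<le>\<^sub>0" by (rule not_nonpos[OF b _ ph(2)]) (use s \<eta> in auto)
    ultimately show ?thesis by blast
  qed
  then show "1 + \<xi>/d \<noteq> 0" and "1 + \<xi>/b \<notin> \<real>\<^sub>\<le>\<^sub>0" by auto
qed

lemma holo:
  fixes b d p :: complex
  assumes b: "b \<noteq> 0" and d: "d \<noteq> 0" and nd: "norm d < norm b" and \<eta>: "\<eta> > 0"
    and sep: "\<And>\<phi>. \<bar>\<phi> - \<theta>\<bar> < \<delta> \<Longrightarrow> \<eta> \<le> norm (cis \<phi> - sgn (-d)) \<and> \<eta> \<le> norm (cis \<phi> - sgn (-b))"
  shows "(\<lambda>\<xi>. inverse (1 + \<xi>/d)) holomorphic_on (ball 0 (norm d) \<union> open_sector \<theta> \<delta>)"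
    and "(\<lambda>\<xi>. (1 + \<xi>/b) powr p * inverse (1 + \<xi>/d)) holomorphic_on (ball 0 (norm d) \<union> open_sector \<theta> \<delta>)"
  using region_facts[OF b d nd \<eta> sep] b d
  by (auto intro!: holomorphic_intros)
theorem mainTheorem6:
  fixes \<alpha>1 \<alpha>2 \<alpha>3 \<beta>1 \<beta>2 \<beta>3 :: complex
  assumes "\<beta>1 \<noteq> \<beta>2" "\<beta>1 \<noteq> \<beta>3" "\<beta>2 \<noteq> \<beta>3"
    and "norm (\<beta>3 - \<beta>1) < norm (\<beta>3 - \<beta>2)"
    and "\<exists>k::int. k \<le> -4 \<and> \<alpha>3 - \<alpha>1 = of_int k"
    and "\<not> (\<exists>k::int. k \<ge> -1 \<and> \<alpha>2 - \<alpha>1 = of_int k)"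
  defines "\<phi>hat \<equiv> (\<lambda>n::nat.
       let c = (-1) ^ n * pochhammer (\<alpha>1 - \<alpha>2 - 1) n / (\<beta>3 - \<beta>2) ^ n;
           Ft = (\<Sum>p. pochhammer (\<alpha>1 - \<alpha>2 - 1 + of_nat n) p / pochhammer (1 + of_nat n) p
                   * ((\<beta>3 - \<beta>1) / (\<beta>3 - \<beta>2)) ^ p)
       in c * Ft - c)"
    and "\<phi> \<equiv> (\<lambda>\<theta> x. ((\<beta>1 - \<beta>2) / (\<beta>3 - \<beta>2)) powr (\<alpha>2 - \<alpha>1 + 1)
                   * laplace_dir (\<lambda>\<xi>. inverse (1 + \<xi> / (\<beta>3 - \<beta>1))) \<theta> x
               - laplace_dir (\<lambda>\<xi>. (1 + \<xi> / (\<beta>3 - \<beta>2)) powr (1 + \<alpha>2 - \<alpha>1)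
                   * inverse (1 + \<xi> / (\<beta>3 - \<beta>1))) \<theta> x)"
  shows "one_summable \<phi>hat \<and>
         (\<forall>\<theta>. cis \<theta> \<noteq> sgn (\<beta>1 - \<beta>3) \<and> cis \<theta> \<noteq> sgn (\<beta>2 - \<beta>3) \<longrightarrow>
              is_one_sum_dir \<phi>hat \<theta> (\<phi> \<theta>))"
proof -
  define a where "a = \<alpha>1 - \<alpha>2 - 1"
  define b where "b = \<beta>3 - \<beta>2"
  define d where "d = \<beta>3 - \<beta>1"
  have b0: "b \<noteq> 0" using assms(3) by (simp add: b_def)
  have d0: "d \<noteq> 0" using assms(2) by (simp add: d_def)
  have nd: "norm d < norm b" using assms(4) by (simp add: b_def d_def)
  have ak: "\<forall>k::nat. a \<noteq> - of_nat k"
  proof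
    fix k :: nat
    show "a \<noteq> - of_nat k"
    proof
      assume ak: "a = - of_nat k"
      have "\<alpha>2 - \<alpha>1 = - a - 1" by (simp add: a_def)
      also have "\<dots> = of_int (int k - 1)" using ak by simp
      finally have e: "\<alpha>2 - \<alpha>1 = of_int (int k - 1)" .
      have "int k - 1 \<ge> -1" by simp
      then show False using assms(6) e by blast
    qed
  qed
  have pe: "1 + \<alpha>2 - \<alpha>1 = -a" by (simp add: a_def)
  define K where "K = (1 - d/b) powr (-a)"
  have Keq: "((\<beta>1 - \<beta>2) / (\<beta>3 - \<beta>2)) powr (\<alpha>2 - \<alpha>1 + 1) = K"
  proof -
    have "(\<beta>1 - \<beta>2) / (\<beta>3 - \<beta>2) = 1 - d/b" using b0 by (simp add: b_def d_def field_simps)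
    moreover have "\<alpha>2 - \<alpha>1 + 1 = -a" by (simp add: a_def)
    ultimately show ?thesis by (simp add: K_def)
  qed
  define g1 where "g1 = (\<lambda>\<xi>::complex. inverse (1 + \<xi>/d))"
  define g2 where "g2 = (\<lambda>\<xi>::complex. (1 + \<xi>/b) powr (-a) * inverse (1 + \<xi>/d))"
  define h where "h = (\<lambda>\<xi>. K * g1 \<xi> - g2 \<xi>)"
  have phihat: "\<phi>hat N = fact N * (-1/d)^N * (K - (\<Sum>m<Suc N. pochhammer a m / fact m * (d/b)^m))" for N
    unfolding assms(7) a_def[symmetric] b_def[symmetric] d_def[symmetric] K_def
    by (rule coeff_formula[OF b0 d0 nd ak])
  have borel: "(\<lambda>n. \<phi>hat n * \<zeta>^n / fact n) sums h \<zeta>" if "\<zeta> \<in> ball 0 (norm d)" for \<zeta>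
    unfolding phihat h_def g1_def g2_def K_def
    by (rule borel_sum[OF b0 d0 nd]) (use that in simp)
  have main: "is_one_sum_dir \<phi>hat \<theta> (\<phi> \<theta>)" if th: "cis \<theta> \<noteq> sgn (\<beta>1 - \<beta>3)" "cis \<theta> \<noteq> sgn (\<beta>2 - \<beta>3)" for \<theta>
  proof -
    have th': "cis \<theta> \<noteq> sgn (-d)" "cis \<theta> \<noteq> sgn (-b)" using th by (simp_all add: b_def d_def)
    obtain \<delta> \<eta> where \<delta>: "\<delta> > 0" and \<eta>: "\<eta> > 0"
      and sep: "\<And>\<phi>. \<bar>\<phi> - \<theta>\<bar> < \<delta> \<Longrightarrow> \<eta> \<le> norm (cis \<phi> - sgn (-d)) \<and> \<eta> \<le> norm (cis \<phi> - sgn (-b))"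
      by (rule dir_sep[OF th']) blast
    define C0 where "C0 = exp (norm (-a) * (\<bar>ln (\<eta>/2)\<bar> + pi))"
    define B where "B = norm (-a) / norm b"
    define A where "A = norm K * (2/\<eta>) + C0 * (2/\<eta>)"
    have B0: "B \<ge> 0" by (simp add: B_def)
    have bds: "norm (g1 \<xi>) \<le> 2/\<eta> \<and> norm (g2 \<xi>) \<le> (C0 * (2/\<eta>)) * exp (B * t) \<and> norm (h \<xi>) \<le> A * exp (B * t)"
      if t: "t \<ge> 0" and ph: "\<bar>\<phi> - \<theta>\<bar> < \<delta>" and xi: "\<xi> = of_real t * cis \<phi>" for t \<phi> \<xi>
    proof -
      have s: "\<eta> \<le> norm (cis \<phi> - sgn (-d))" "\<eta> \<le> norm (cis \<phi> - sgn (-b))" using sep[OF ph] by auto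
      have n1: "norm (g1 \<xi>) \<le> 2/\<eta>" unfolding g1_def by (rule growth(1)[OF b0 d0 \<eta> t xi s])
      have n2a: "norm ((1 + \<xi>/b) powr (-a)) \<le> C0 * exp (B * t)"
        unfolding C0_def B_def by (rule growth(2)[OF b0 d0 \<eta> t xi s])
      have n2: "norm (g2 \<xi>) \<le> (C0 * (2/\<eta>)) * exp (B * t)"
      proof -
        have "norm (g2 \<xi>) = norm ((1 + \<xi>/b) powr (-a)) * norm (g1 \<xi>)" unfolding g1_def g2_def norm_mult ..
        also have "\<dots> \<le> (C0 * exp (B * t)) * (2/\<eta>)" using n1 n2a by (intro mult_mono) (auto simp: C0_def)
        finally show ?thesis by (simp add: mult_ac)
      qed
      have e1: "1 \<le> exp (B * t)" using B0 t by simp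
      have "norm (h \<xi>) \<le> norm K * norm (g1 \<xi>) + norm (g2 \<xi>)"
        unfolding h_def using norm_triangle_ineq4[of "K * g1 \<xi>" "g2 \<xi>"] by (simp add: norm_mult)
      also have "\<dots> \<le> norm K * (2/\<eta>) + (C0 * (2/\<eta>)) * exp (B * t)"
        using n1 n2 by (intro add_mono mult_left_mono) auto
      also have "\<dots> \<le> norm K * (2/\<eta>) * exp (B * t) + (C0 * (2/\<eta>)) * exp (B * t)"
        using mult_left_mono[OF e1, of "norm K * (2/\<eta>)"] \<eta> by simp
      also have "\<dots> = A * exp (B * t)" by (simp add: A_def algebra_simps)
      finally show ?thesis using n1 n2 by blast
    qed
    define U where "U = ball 0 (norm d) \<union> open_sector \<theta> \<delta>"
    have hg1: "g1 holomorphic_on U" unfolding U_def g1_def by (rule holo(1)[OF b0 d0 nd \<eta> sep])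
    have hg2: "g2 holomorphic_on U" unfolding U_def g2_def by (rule holo(2)[OF b0 d0 nd \<eta> sep])
    have hh: "h holomorphic_on U" unfolding h_def by (intro holomorphic_intros hg1 hg2)
    have ray: "(\<lambda>t. of_real t * cis \<theta>) ` {0..} \<subseteq> U"
    proof
      fix \<xi> assume "\<xi> \<in> (\<lambda>t. of_real t * cis \<theta>) ` {0..}"
      then obtain t where t: "t \<ge> 0" "\<xi> = of_real t * cis \<theta>" by auto
      show "\<xi> \<in> U"
      proof (cases "t = 0")
        case True then show ?thesis using t d0 by (simp add: U_def)
      next
        case False
        then have "\<xi> \<noteq> 0" "norm \<xi> = t" using t by (auto simp: norm_mult)
        then have "\<xi> \<in> open_sector \<theta> \<delta>" unfolding open_sector_def using t \<delta> by (auto intro!: exI[of _ \<theta>])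
        then show ?thesis by (simp add: U_def)
      qed
    qed
    have cray: "continuous_on {0..} (\<lambda>t. g (of_real t * cis \<theta>))" if "g holomorphic_on U" for g
      by (rule continuous_on_compose2[OF holomorphic_on_imp_continuous_on[OF that] _ ray]) (intro continuous_intros)
    have bc: "borel_cont \<phi>hat \<theta> h A B"
      unfolding borel_cont_def
    proof (intro exI conjI ballI)
      show "norm d > 0" using d0 by simp
      show "\<delta> > 0" by (rule \<delta>)
      show "(\<lambda>n. \<phi>hat n * \<zeta> ^ n / fact n) sums h \<zeta>" if "\<zeta> \<in> ball 0 (norm d)" for \<zeta> using borel[OF that] .
      show "h holomorphic_on (ball 0 (norm d) \<union> open_sector \<theta> \<delta>)" using hh by (simp add: U_def)
      fix \<xi> assume "\<xi> \<in> open_sector \<theta> \<delta>"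
      then obtain \<phi> where ph: "\<bar>\<phi> - \<theta>\<bar> < \<delta>" "\<xi> = of_real (norm \<xi>) * cis \<phi>"
        unfolding open_sector_def by blast
      show "norm (h \<xi>) \<le> A * exp (B * norm \<xi>)" using bds[OF _ ph] by simp
    qed
    show ?thesis
      unfolding is_one_sum_dir_def
    proof (intro exI conjI allI impI)
      show "borel_cont \<phi>hat \<theta> h A B" by (rule bc)
      fix x :: complex assume x: "x \<noteq> 0 \<and> Re (cis \<theta> / x) > B"
      have bd1: "norm (g1 (of_real t * cis \<theta>)) \<le> 2/\<eta> * exp (B * t)" if "t \<ge> 0" for t
      proof -
        have "norm (g1 (of_real t * cis \<theta>)) \<le> 2/\<eta>" using bds[OF that _ refl, of \<theta>] \<delta> by simp
        also have "\<dots> \<le> 2/\<eta> * exp (B * t)" using B0 that \<eta> by (intro mult_le_cancel_left1[THEN iffD2]) auto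
        finally show ?thesis .
      qed
      have bd2: "norm (g2 (of_real t * cis \<theta>)) \<le> (C0 * (2/\<eta>)) * exp (B * t)" if "t \<ge> 0" for t
        using bds[OF that _ refl, of \<theta>] \<delta> by simp
      have i1: "laplace_kernel g1 \<theta> x integrable_on {0..}"
        by (rule lap_int[OF cray[OF hg1] bd1]) (use x in auto)
      have i2: "laplace_kernel g2 \<theta> x integrable_on {0..}"
        by (rule lap_int[OF cray[OF hg2] bd2]) (use x in auto)
      have keq: "laplace_kernel h \<theta> x = (\<lambda>t. K * laplace_kernel g1 \<theta> x t - laplace_kernel g2 \<theta> x t)"
        by (rule ext) (simp add: laplace_kernel_def h_def algebra_simps)
      have g1eq: "(\<lambda>\<xi>. inverse (1 + \<xi> / (\<beta>3 - \<beta>1))) = g1" by (simp add: g1_def d_def)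
      have g2eq: "(\<lambda>\<xi>. (1 + \<xi> / (\<beta>3 - \<beta>2)) powr (1 + \<alpha>2 - \<alpha>1) * inverse (1 + \<xi> / (\<beta>3 - \<beta>1))) = g2"
        by (simp add: g2_def b_def d_def pe)
      have phi_eq: "\<phi> \<theta> x = K * laplace_dir g1 \<theta> x - laplace_dir g2 \<theta> x"
        unfolding assms(8) Keq g1eq g2eq by (rule refl)
      show "(laplace_kernel h \<theta> x has_integral \<phi> \<theta> x) {0..}"
        unfolding keq phi_eq laplace_dir_def
        by (intro has_integral_diff has_integral_mult_right integrable_integral i1 i2)
    qed
  qed
  have "one_summable \<phi>hat" unfolding one_summable_def
  proof (intro exI conjI allI impI)
    show "finite {sgn (\<beta>1 - \<beta>3), sgn (\<beta>2 - \<beta>3)}" by simp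
    fix \<theta> assume "cis \<theta> \<notin> {sgn (\<beta>1 - \<beta>3), sgn (\<beta>2 - \<beta>3)}"
    then have "is_one_sum_dir \<phi>hat \<theta> (\<phi> \<theta>)" using main by blast
    then show "one_summable_dir \<phi>hat \<theta>" unfolding is_one_sum_dir_def one_summable_dir_def by blast
  qed
  then show ?thesis using main by blast
qed

end
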